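(* Let $g\ge 3$ and let $(\alpha,\beta)$ be a coherent minimally intersecting filling pair on $S_g$, so $i(\alpha,\beta)=2g-1$. Let $P$ be the $4(2g-1)$-gon obtained by cutting $S_g$ along $\alpha\cup\beta$, and let $a_1,\dots,a_{2(2g-1)}$ be its $\alpha$-sides in cyclic clockwise order. Then there exists an index $i$ such that $a_i$ is not glued to its opposite side $a_{i+(2g-1)}$ (indices taken mod $2(2g-1)$). The same statement holds with $\beta$ in place of $\alpha$.
   Context: $S_g$ is the closed orientable surface of genus $g$. A filling pair is a pair of simple closed curves in minimal position whose complement is a union of open disks. It is minimally intersecting if $i(\alpha,\beta)$ is minimal among filling pairs on $S_g$; for $g\ge 3$ this minimum is $2g-1$. It is coherent if the absolute value of the algebraic intersection number equals the geometric intersection number $i(\alpha,\beta)$. For such a pair with $g\ge3$, the complement $S_g\setminus(\alpha\cup\beta)$ is a single open disk. Its closure is a $4(2g-1)$-gon $P$ whose sides alternate between subarcs of $\alpha$ and subarcs of $\beta$ (subarcs run between consecutive intersection points). Each of the $2g-1$ subarcs of $\alpha$, and each of the $2g-1$ subarcs of $\beta$, appears as exactly two sides of $P$, and $S_g$ is recovered by gluing these pairs of sides. The opposite of the $\alpha$-side $a_i$ is the $\alpha$-side $a_{i+(2g-1)}$. *)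

theory Defs
  imports Main
begin

text \<open>
Combinatorial model of a filling pair (alpha, beta) on a closed oriented surface
whose complement is a single open disk.

The union alpha \<union> beta is a 4-valent graph embedded in the surface with
n = i(alpha,beta) vertices (the intersection points) and 2n edges (the subarcs).
We label the intersection points 0,...,n-1 in the order alpha traverses them, so
the alpha-subarc k runs from point k to point (k+1) mod n.  beta traverses them
in the order sg 0, sg 1, ..., sg (n-1), so the beta-subarc j runs from point sg j
to point sg ((j+1) mod n); sg is a bijection of {..<n}.  The sign of the
intersection at point v (with respect to the orientation of the surface) is
recorded by eps v.  The embedding of the graph in the oriented surface is
given by the rotation system (cyclic order of the four half-edges around each
vertex) determined by these signs, and the complementary regions are the orbits
of the face-tracing permutation (standard ribbon-graph / rotation system theory).
\<close>

datatype curve = Alpha | Beta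

text \<open>A dart (oriented subarc): curve, index of the subarc, True = traversed in the
direction of the curve.\<close>
type_synonym dart = "curve \<times> nat \<times> bool"

definition darts :: "nat \<Rightarrow> dart set" where
  "darts n = {d. fst (snd d) < n}"

definition reverse_dart :: "dart \<Rightarrow> dart" where
  "reverse_dart d = (fst d, fst (snd d), \<not> snd (snd d))"

definition edge_of :: "dart \<Rightarrow> curve \<times> nat" where
  "edge_of d = (fst d, fst (snd d))"

definition alpha_out_fwd :: "nat \<Rightarrow> nat \<Rightarrow> dart" where
  "alpha_out_fwd n v = (Alpha, v, True)"
definition alpha_out_bwd :: "nat \<Rightarrow> nat \<Rightarrow> dart" where
  "alpha_out_bwd n v = (Alpha, (v + n - 1) mod n, False)"
definition beta_out_fwd :: "nat \<Rightarrow> (nat \<Rightarrow> nat) \<Rightarrow> nat \<Rightarrow> dart" where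
  "beta_out_fwd n sg v = (Beta, the_inv_into {..<n} sg v, True)"
definition beta_out_bwd :: "nat \<Rightarrow> (nat \<Rightarrow> nat) \<Rightarrow> nat \<Rightarrow> dart" where
  "beta_out_bwd n sg v = (Beta, (the_inv_into {..<n} sg v + n - 1) mod n, False)"

text \<open>Rotation: the next outgoing dart (counterclockwise) around the tail vertex.
At a positive crossing the cyclic order is alpha-fwd, beta-fwd, alpha-bwd, beta-bwd;
at a negative crossing it is alpha-fwd, beta-bwd, alpha-bwd, beta-fwd.\<close>
fun rot :: "nat \<Rightarrow> (nat \<Rightarrow> nat) \<Rightarrow> (nat \<Rightarrow> bool) \<Rightarrow> dart \<Rightarrow> dart" where
  "rot n sg eps (Alpha, k, True) =
     (let v = k in if eps v then beta_out_fwd n sg v else beta_out_bwd n sg v)"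
| "rot n sg eps (Beta, j, True) =
     (let v = sg j in if eps v then alpha_out_bwd n v else alpha_out_fwd n v)"
| "rot n sg eps (Alpha, k, False) =
     (let v = Suc k mod n in if eps v then beta_out_bwd n sg v else beta_out_fwd n sg v)"
| "rot n sg eps (Beta, j, False) =
     (let v = sg (Suc j mod n) in if eps v then alpha_out_fwd n v else alpha_out_bwd n v)"

text \<open>Face-tracing permutation; its orbits are the boundary walks of the
complementary regions.  Consecutive darts in a face alternate between alpha and beta.\<close>
definition face_step :: "nat \<Rightarrow> (nat \<Rightarrow> nat) \<Rightarrow> (nat \<Rightarrow> bool) \<Rightarrow> dart \<Rightarrow> dart" where
  "face_step n sg eps d = rot n sg eps (reverse_dart d)"

text \<open>The complement of alpha \<union> beta is a single disk: one face orbit containing all darts.\<close>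
definition single_face :: "nat \<Rightarrow> (nat \<Rightarrow> nat) \<Rightarrow> (nat \<Rightarrow> bool) \<Rightarrow> bool" where
  "single_face n sg eps \<longleftrightarrow>
     darts n = range (\<lambda>m. (face_step n sg eps ^^ m) (Alpha, 0, True))"

definition alg_int :: "nat \<Rightarrow> (nat \<Rightarrow> bool) \<Rightarrow> int" where
  "alg_int n eps = (\<Sum>v<n. if eps v then 1 else -1)"

definition coherent :: "nat \<Rightarrow> (nat \<Rightarrow> bool) \<Rightarrow> bool" where
  "coherent n eps \<longleftrightarrow> \<bar>alg_int n eps\<bar> = int n"

text \<open>The i-th side of curve c of the polygon P (i = 0,1,...,2n-1 in cyclic order
along the boundary of P), starting from the c-subarc 0 traversed forwards.\<close>
definition side :: "nat \<Rightarrow> (nat \<Rightarrow> nat) \<Rightarrow> (nat \<Rightarrow> bool) \<Rightarrow> curve \<Rightarrow> nat \<Rightarrow> dart" where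
  "side n sg eps c i = (face_step n sg eps ^^ (2 * i)) (c, 0, True)"

definition glued_to_opposite :: "nat \<Rightarrow> (nat \<Rightarrow> nat) \<Rightarrow> (nat \<Rightarrow> bool) \<Rightarrow> curve \<Rightarrow> nat \<Rightarrow> bool" where
  "glued_to_opposite n sg eps c i \<longleftrightarrow>
     edge_of (side n sg eps c i) = edge_of (side n sg eps c ((i + n) mod (2 * n)))"

end

theory Submission
  imports Defs
begin



lemma mod_SS: "Suc (Suc m) mod n = Suc (Suc (m mod n)) mod (n::nat)"
  by (metis mod_Suc_eq)

lemma key_arith:
  fixes n :: nat and s p :: "nat \<Rightarrow> nat"
  assumes n: "odd n" "n \<ge> 3"
  and sl: "\<And>k. k < n \<Longrightarrow> s k < n" and pl: "\<And>k. k<n \<Longrightarrow> p k < n"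
  and sp: "\<And>k. k<n \<Longrightarrow> s (p k) = k" and ps: "\<And>k. k<n \<Longrightarrow> p (s k) = k"
  and s0: "s 0 \<noteq> 0"
  and C: "\<And>k. k < n \<Longrightarrow> s k = (p (Suc k mod n) + n - 1) mod n"
  shows False
proof -
  have npos: "0 < n" using n by simp
  have h1: "Suc (s k) mod n = p (Suc k mod n)" if "k < n" for k
  proof -
    define q where "q = p (Suc k mod n)"
    have q: "q < n" unfolding q_def by (rule pl) (simp add: npos)
    have "Suc (s k) mod n = Suc ((q + n - 1) mod n) mod n" unfolding q_def by (subst C[OF that]) (rule refl)
    also have "\<dots> = Suc (q + n - 1) mod n" by (rule mod_Suc_eq)
    also have "Suc (q + n - 1) = q + n" using npos by simp
    also have "(q + n) mod n = q" using q by simp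
    finally show ?thesis unfolding q_def .
  qed
  have h2: "s (Suc x mod n) = Suc (p x) mod n" if "x < n" for x
  proof -
    have a: "Suc (s (p x)) mod n = p (Suc (p x) mod n)" by (rule h1[OF pl[OF that]])
    have b: "s (p x) = x" by (rule sp[OF that])
    have "Suc x mod n = p (Suc (p x) mod n)" using a unfolding b .
    then have "s (Suc x mod n) = s (p (Suc (p x) mod n))" by (rule arg_cong)
    also have "\<dots> = Suc (p x) mod n" by (rule sp) (simp add: npos)
    finally show ?thesis .
  qed
  have h3: "s (Suc (Suc x) mod n) = Suc (Suc (s x)) mod n" if "x < n" for x
  proof -
    have "s (Suc (Suc x) mod n) = s (Suc (Suc x mod n) mod n)" by (simp only: mod_Suc_eq)
    also have "\<dots> = Suc (p (Suc x mod n)) mod n" by (rule h2) (simp add: npos)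
    also have "p (Suc x mod n) = Suc (s x) mod n" by (rule h1[OF that, symmetric])
    also have "Suc (Suc (s x) mod n) mod n = Suc (Suc (s x)) mod n" by (simp only: mod_Suc_eq)
    finally show ?thesis .
  qed
  have h4: "s ((2*j) mod n) = (s 0 + 2*j) mod n" for j
  proof (induction j)
    case 0 then show ?case using sl[OF npos] by simp
  next
    case (Suc j)
    have e: "(2 * Suc j) mod n = Suc (Suc ((2*j) mod n)) mod n"
      by (metis mod_SS mult_Suc_right add_2_eq_Suc)
    have "s ((2 * Suc j) mod n) = Suc (Suc (s ((2*j) mod n))) mod n"
      unfolding e by (rule h3) (simp add: npos)
    also have "\<dots> = Suc (Suc ((s 0 + 2*j) mod n)) mod n" unfolding Suc ..
    also have "\<dots> = Suc (Suc (s 0 + 2*j)) mod n" by (rule mod_SS[symmetric])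
    also have "Suc (Suc (s 0 + 2*j)) = s 0 + 2 * Suc j" by simp
    finally show ?case .
  qed
  obtain m where m: "n = 2*m+1" using n by (metis oddE)
  have h5: "s y = (s 0 + y) mod n" if "y < n" for y
  proof -
    have eq1: "2*(y*(m+1)) = y + y*n" using m by (simp add: algebra_simps)
    have a: "(2*(y*(m+1))) mod n = y" unfolding eq1 using that by simp
    have eq2: "s 0 + 2*(y*(m+1)) = (s 0 + y) + y*n" using m by (simp add: algebra_simps)
    have b: "(s 0 + 2*(y*(m+1))) mod n = (s 0 + y) mod n" unfolding eq2 by simp
    show ?thesis using h4[of "y*(m+1)"] unfolding a b .
  qed
  define c where "c = s 0"
  have c: "c < n" using sl npos c_def by simp
  have p1: "Suc c mod n = p 1"
  proof -
    have "Suc (s 0) mod n = p (Suc 0 mod n)" by (rule h1[OF npos])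
    moreover have "Suc 0 mod n = 1" using n by simp
    ultimately show ?thesis unfolding c_def by simp
  qed
  have p1l: "p 1 < n" using pl n by simp
  have "s (p 1) = 1" using sp n by simp
  hence "(c + p 1) mod n = 1" using h5[OF p1l] unfolding c_def by simp
  hence "(c + Suc c mod n) mod n = 1" unfolding p1 .
  hence "(2*c + 1) mod n = 1 mod n" using n by (simp add: mod_add_right_eq mult_2)
  hence "n dvd 2*c" using mod_eq_dvd_iff_nat[of 1 "2*c+1" n] by simp
  then obtain k where k: "2*c = n*k" by blast
  have "k < 2"
  proof (rule ccontr)
    assume "\<not> k < 2"
    hence "n*2 \<le> n*k" by (intro mult_le_mono2) simp
    thus False using k c by linarith
  qed
  moreover have "k \<noteq> 1" using k n by auto
  ultimately have "k = 0" by simp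
  hence "c = 0" using k by simp
  thus False using s0 c_def by simp
qed


lemma pm1: "0 < n \<Longrightarrow> k < n \<Longrightarrow> Suc ((k + n - 1) mod n) mod n = (k::nat)"
  by (metis Suc_diff_1 add_Suc_right add_gr_0 mod_Suc_eq mod_add_self2 mod_less)
lemma mp1: assumes "0 < n" "k < n" shows "(Suc k mod n + n - 1) mod n = (k::nat)"
proof (cases "Suc k < n")
  case True
  then have "Suc k + n - 1 = k + n" by simp
  then show ?thesis using True assms by simp
next
  case False
  then have "Suc k = n" using assms by simp
  then show ?thesis by simp
qed

lemma pm1': "0 < n \<Longrightarrow> k < n \<Longrightarrow> Suc ((k + n - Suc 0) mod n) mod n = (k::nat)"
  using pm1 by simp
lemma mp1': "0 < n \<Longrightarrow> k < n \<Longrightarrow> (Suc k mod n + n - Suc 0) mod n = (k::nat)"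
  using mp1 by simp

definition rinv :: "nat \<Rightarrow> (nat \<Rightarrow> nat) \<Rightarrow> nat \<Rightarrow> nat" where
  "rinv n sg = the_inv_into {..<n} sg"

lemma rho_lt: "bij_betw sg {..<n} {..<n} \<Longrightarrow> k < n \<Longrightarrow> rinv n sg k < n"
  unfolding rinv_def by (metis bij_betw_def lessThan_iff the_inv_into_into subset_refl)
lemma sg_rho: "bij_betw sg {..<n} {..<n} \<Longrightarrow> k < n \<Longrightarrow> sg (rinv n sg k) = k"
  unfolding rinv_def by (simp add: f_the_inv_into_f_bij_betw)
lemma rho_sg: "bij_betw sg {..<n} {..<n} \<Longrightarrow> k < n \<Longrightarrow> rinv n sg (sg k) = k"
  unfolding rinv_def by (meson bij_betw_imp_inj_on lessThan_iff the_inv_into_f_f)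
lemma sg_lt: "bij_betw sg {..<n} {..<n} \<Longrightarrow> k < n \<Longrightarrow> sg k < n"
  using bij_betwE by blast

lemma fT:
  assumes "\<forall>v<n. eps v" and "k < n" "0 < n" "bij_betw sg {..<n} {..<n}"
  shows "face_step n sg eps (Alpha,k,True) = (Beta, (rinv n sg (Suc k mod n) + n - 1) mod n, False)"
    "face_step n sg eps (Alpha,k,False) = (Beta, rinv n sg k, True)"
    "face_step n sg eps (Beta,k,True) = (Alpha, sg (Suc k mod n), True)"
    "face_step n sg eps (Beta,k,False) = (Alpha, (sg k + n - 1) mod n, False)"
  using assms
  by (simp_all add: face_step_def reverse_dart_def Let_def alpha_out_fwd_def alpha_out_bwd_def
      beta_out_fwd_def beta_out_bwd_def rinv_def sg_lt)

lemma fF: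
  assumes "\<forall>v<n. \<not> eps v" and "k < n" "0 < n" "bij_betw sg {..<n} {..<n}"
  shows "face_step n sg eps (Alpha,k,True) = (Beta, rinv n sg (Suc k mod n), True)"
    "face_step n sg eps (Beta,k,True) = (Alpha, (sg (Suc k mod n) + n - 1) mod n, False)"
    "face_step n sg eps (Alpha,k,False) = (Beta, (rinv n sg k + n - 1) mod n, False)"
    "face_step n sg eps (Beta,k,False) = (Alpha, sg k, True)"
  using assms
  by (simp_all add: face_step_def reverse_dart_def Let_def alpha_out_fwd_def alpha_out_bwd_def
      beta_out_fwd_def beta_out_bwd_def rinv_def sg_lt)



lemma funpow_mod:
  assumes "(g^^p) y = y" shows "(g^^m) y = (g^^(m mod p)) y"
proof -
  have per: "(g^^(p*k)) y = y" for k
  proof (induction k)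
    case 0 then show ?case by simp
  next
    case (Suc k)
    have "(g^^(p*Suc k)) y = (g^^p) ((g^^(p*k)) y)" by (simp add: funpow_add)
    then show ?case using Suc assms by simp
  qed
  have "m = m mod p + p*(m div p)" by simp
  hence "(g^^m) y = (g^^(m mod p + p*(m div p))) y" by metis
  also have "\<dots> = (g^^(m mod p)) ((g^^(p*(m div p))) y)" by (simp only: funpow_add o_apply)
  finally show ?thesis using per by simp
qed

lemma key_conj:
  fixes sig rh :: "nat \<Rightarrow> nat"
  assumes n: "odd n" "3 \<le> n" and sl: "\<And>k. k<n \<Longrightarrow> sig k < n" and rl: "\<And>k. k<n \<Longrightarrow> rh k < n"
    and sr: "\<And>k. k<n \<Longrightarrow> sig (rh k) = k" and rs: "\<And>k. k<n \<Longrightarrow> rh (sig k) = k"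
    and C: "(\<forall>k<n. sig (Suc (rh k) mod n) = (sig ((rh (Suc k mod n) + n - 1) mod n) + n - 1) mod n)
       \<or> (\<forall>k<n. sig ((rh k + n - 1) mod n) = (sig (Suc (rh (Suc k mod n)) mod n) + n - 1) mod n)"
  shows False
proof -
  define s where "s k = sig (Suc (rh k) mod n)" for k
  define p where "p k = sig ((rh k + n - 1) mod n)" for k
  have npos: "0 < n" using n by simp
  have s_l: "s k < n" if "k < n" for k using sl npos unfolding s_def by simp
  have p_l: "p k < n" if "k < n" for k using sl npos unfolding p_def by simp
  have sp: "s (p k) = k" if "k < n" for k
    unfolding s_def p_def using that rl rs sr npos pm1 by simp
  have ps: "p (s k) = k" if "k < n" for k
    unfolding s_def p_def using that rl rs sr npos mp1 by simp
  have s0: "s 0 \<noteq> 0"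
  proof
    assume "s 0 = 0"
    hence "rh (sig (Suc (rh 0) mod n)) = rh 0" unfolding s_def using sr npos by simp
    hence e: "Suc (rh 0) mod n = rh 0" using rs npos by simp
    have "rh 0 < n" using rl npos by simp
    show False
    proof (cases "Suc (rh 0) < n")
      case True then show False using e by simp
    next
      case False then have "Suc (rh 0) = n" using \<open>rh 0 < n\<close> by simp
      then show False using e n by simp
    qed
  qed
  have p0: "p 0 \<noteq> 0"
  proof
    assume "p 0 = 0"
    hence "s (p 0) = s 0" by simp
    moreover have "s (p 0) = 0" using sp[of 0] npos by blast
    ultimately show False using s0 by simp
  qed
  from C show False
  proof
    assume c: "\<forall>k<n. sig (Suc (rh k) mod n) = (sig ((rh (Suc k mod n) + n - 1) mod n) + n - 1) mod n"
    have cs: "s k = (p (Suc k mod n) + n - 1) mod n" if "k < n" for k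
      using spec[OF c, of k] that unfolding s_def p_def by blast
    show False using key_arith[of n s p, OF n s_l p_l sp ps s0 cs] .
  next
    assume c: "\<forall>k<n. sig ((rh k + n - 1) mod n) = (sig (Suc (rh (Suc k mod n)) mod n) + n - 1) mod n"
    have cs: "p k = (s (Suc k mod n) + n - 1) mod n" if "k < n" for k
      using spec[OF c, of k] that unfolding s_def p_def by blast
    show False using key_arith[of n p s, OF n p_l s_l ps sp p0 cs] .
  qed
qed



lemma orbit_period:
  assumes fin: "finite D" and inj: "inj_on f D" and into: "f ` D \<subseteq> D"
    and D: "D = range (\<lambda>m. (f^^m) x)"
  shows "(f^^(card D)) x = x"
proof -
  have fD: "f ` D = D" using card_image[OF inj] card_subset_eq[OF fin into] by simp
  have "x \<in> D" using D by (metis funpow_0 rangeI)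
  then obtain y where y: "y \<in> D" "f y = x" using fD by (metis imageE)
  then obtain m where "y = (f^^m) x" using D by auto
  hence q: "(f^^(Suc m)) x = x" using y by simp
  define p where "p = (LEAST q. 0 < q \<and> (f^^q) x = x)"
  have p: "0 < p \<and> (f^^p) x = x" unfolding p_def
    by (rule LeastI[of "\<lambda>q. 0<q \<and> (f^^q) x = x" "Suc m"]) (use q in simp)
  have pmin: "\<not> (0 < q \<and> (f^^q) x = x)" if "q < p" for q
    using not_less_Least[OF that[unfolded p_def]] .
  have per: "(f^^(p*k)) x = x" for k
  proof (induction k)
    case 0 then show ?case by simp
  next
    case (Suc k)
    have "(f^^(p*Suc k)) x = (f^^p) ((f^^(p*k)) x)" by (simp add: funpow_add)
    then show ?case using Suc p by simp
  qed
  have red: "(f^^m) x = (f^^(m mod p)) x" for m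
  proof -
    have "m = m mod p + p*(m div p)" by simp
    hence "(f^^m) x = (f^^(m mod p + p*(m div p))) x" by metis
    also have "\<dots> = (f^^(m mod p)) ((f^^(p*(m div p))) x)" by (simp only: funpow_add o_apply)
    finally show ?thesis using per by simp
  qed
  have D2: "D = (\<lambda>m. (f^^m) x) ` {..<p}"
  proof
    show "D \<subseteq> (\<lambda>m. (f^^m) x) ` {..<p}"
    proof
      fix z assume "z \<in> D"
      then obtain m where "z = (f^^m) x" using D by auto
      then have "z = (f^^(m mod p)) x" using red by simp
      moreover have "m mod p < p" using p by simp
      ultimately show "z \<in> (\<lambda>m. (f^^m) x) ` {..<p}" by auto
    qed
    show "(\<lambda>m. (f^^m) x) ` {..<p} \<subseteq> D" using D by auto
  qed
  have ne: "(f^^a) x \<noteq> (f^^b) x" if "a < b" "b < p" for a b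
  proof
    assume eq: "(f^^a) x = (f^^b) x"
    have "(f^^(p-b+a)) x = (f^^(p-b)) ((f^^a) x)" by (simp add: funpow_add)
    also have "\<dots> = (f^^(p-b)) ((f^^b) x)" using eq by simp
    also have "\<dots> = (f^^(p-b+b)) x" by (simp add: funpow_add)
    also have "\<dots> = x" using p that by simp
    finally have "(f^^(p-b+a)) x = x" .
    moreover have "p-b+a < p" "0 < p-b+a" using that by auto
    ultimately show False using pmin[of "p-b+a"] by blast
  qed
  have inj2: "inj_on (\<lambda>m. (f^^m) x) {..<p}"
  proof (rule inj_onI)
    fix a b assume "a \<in> {..<p}" "b \<in> {..<p}" "(f^^a) x = (f^^b) x"
    then show "a = b" using ne[of a b] ne[of b a] by (metis lessThan_iff linorder_neqE_nat)
  qed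
  have "card D = p" using D2 card_image[OF inj2] by simp
  then show ?thesis using p by simp
qed

lemma coherent_const:
  fixes eps :: "nat \<Rightarrow> bool"
  assumes "\<bar>(\<Sum>v<n. if eps v then 1 else -1) :: int\<bar> = int n"
  shows "(\<forall>v<n. eps v) \<or> (\<forall>v<n. \<not> eps v)"
proof (rule ccontr)
  assume "\<not> ?thesis"
  then obtain a b where ab: "a < n" "\<not> eps a" "b < n" "eps b" by auto
  let ?t = "\<lambda>v. (if eps v then 1 else -1) :: int"
  have fin: "finite {..<n}" by simp
  have "(\<Sum>v<n. ?t v) = ?t a + (\<Sum>v\<in>{..<n}-{a}. ?t v)"
    using sum.remove[OF fin, of a ?t] ab by simp
  also have "(\<Sum>v\<in>{..<n}-{a}. ?t v) \<le> (\<Sum>v\<in>{..<n}-{a}. 1)"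
    by (rule sum_mono) simp
  also have "(\<Sum>v\<in>{..<n}-{a}. (1::int)) = int n - 1" using ab by simp
  finally have up: "(\<Sum>v<n. ?t v) \<le> int n - 2" using ab by simp
  have "(\<Sum>v<n. ?t v) = ?t b + (\<Sum>v\<in>{..<n}-{b}. ?t v)"
    using sum.remove[OF fin, of b ?t] ab by simp
  moreover have "(\<Sum>v\<in>{..<n}-{b}. ?t v) \<ge> (\<Sum>v\<in>{..<n}-{b}. -1)"
    by (rule sum_mono) simp
  moreover have "(\<Sum>v\<in>{..<n}-{b}. (-1::int)) = - (int n - 1)" using ab by simp
  ultimately have lo: "(\<Sum>v<n. ?t v) \<ge> 2 - int n" using ab by simp
  show False using up lo assms by linarith
qed


fun gT :: "nat \<Rightarrow> (nat \<Rightarrow> nat) \<Rightarrow> dart \<Rightarrow> dart" where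
  "gT n sg (Beta, j, False) = (Alpha, (sg (Suc j mod n) + n - 1) mod n, True)"
| "gT n sg (Beta, j, True) = (Alpha, sg j, False)"
| "gT n sg (Alpha, k, True) = (Beta, (rinv n sg k + n - 1) mod n, True)"
| "gT n sg (Alpha, k, False) = (Beta, rinv n sg (Suc k mod n), False)"

fun gF :: "nat \<Rightarrow> (nat \<Rightarrow> nat) \<Rightarrow> dart \<Rightarrow> dart" where
  "gF n sg (Beta, j, True) = (Alpha, (sg j + n - 1) mod n, True)"
| "gF n sg (Alpha, k, False) = (Beta, (rinv n sg (Suc k mod n) + n - 1) mod n, True)"
| "gF n sg (Beta, j, False) = (Alpha, sg (Suc j mod n), False)"
| "gF n sg (Alpha, k, True) = (Beta, rinv n sg k, False)"

lemma darts_mem: "(c, k, b) \<in> darts n \<longleftrightarrow> k < n" by (simp add: darts_def)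

lemma gT_inv:
  assumes "\<forall>v<n. eps v" "0 < n" "bij_betw sg {..<n} {..<n}" "d \<in> darts n"
  shows "gT n sg (face_step n sg eps d) = d"
proof -
  obtain c k b where d: "d = (c, k, b)" by (cases d) auto
  have k: "k < n" using assms(4) d darts_mem by simp
  show ?thesis unfolding d using assms(1-3) k
    by (cases c; cases b) (simp_all add: fT pm1'[OF assms(2)] mp1'[OF assms(2)] sg_rho rho_sg rho_lt sg_lt)
qed

lemma gF_inv:
  assumes "\<forall>v<n. \<not> eps v" "0 < n" "bij_betw sg {..<n} {..<n}" "d \<in> darts n"
  shows "gF n sg (face_step n sg eps d) = d"
proof -
  obtain c k b where d: "d = (c, k, b)" by (cases d) auto
  have k: "k < n" using assms(4) d darts_mem by simp
  show ?thesis unfolding d using assms(1-3) k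
    by (cases c; cases b) (simp_all add: fF pm1'[OF assms(2)] mp1'[OF assms(2)] sg_rho rho_sg rho_lt sg_lt)
qed

lemma f_inj:
  assumes "(\<forall>v<n. eps v) \<or> (\<forall>v<n. \<not> eps v)" "0 < n" "bij_betw sg {..<n} {..<n}"
  shows "inj_on (face_step n sg eps) (darts n)"
  using assms(1)
proof
  assume h: "\<forall>v<n. eps v"
  show ?thesis by (rule inj_on_inverseI[where g="gT n sg"]) (rule gT_inv[OF h assms(2,3)])
next
  assume h: "\<forall>v<n. \<not> eps v"
  show ?thesis by (rule inj_on_inverseI[where g="gF n sg"]) (rule gF_inv[OF h assms(2,3)])
qed

lemma f_into:
  assumes "(\<forall>v<n. eps v) \<or> (\<forall>v<n. \<not> eps v)" "0 < n" "bij_betw sg {..<n} {..<n}"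
    and "d \<in> darts n"
  shows "face_step n sg eps d \<in> darts n"
proof -
  obtain c k b where d: "d = (c, k, b)" by (cases d) auto
  have k: "k < n" using assms(4) d darts_mem by simp
  show ?thesis using assms(1)
  proof
    assume h: "\<forall>v<n. eps v"
    show ?thesis unfolding d using h assms(2,3) k
      by (cases c; cases b) (simp_all add: fT darts_mem rho_lt sg_lt)
  next
    assume h: "\<forall>v<n. \<not> eps v"
    show ?thesis unfolding d using h assms(2,3) k
      by (cases c; cases b) (simp_all add: fF darts_mem rho_lt sg_lt)
  qed
qed

lemma f2_dir:
  assumes "(\<forall>v<n. eps v) \<or> (\<forall>v<n. \<not> eps v)" "0 < n" "bij_betw sg {..<n} {..<n}"
    and "d \<in> darts n"
  shows "snd (snd (face_step n sg eps (face_step n sg eps d))) = (\<not> snd (snd d))"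
proof -
  obtain c k b where d: "d = (c, k, b)" by (cases d) auto
  have k: "k < n" using assms(4) d darts_mem by simp
  show ?thesis using assms(1)
  proof
    assume h: "\<forall>v<n. eps v"
    show ?thesis unfolding d using h assms(2,3) k
      by (cases c; cases b) (simp_all add: fT rho_lt sg_lt)
  next
    assume h: "\<forall>v<n. \<not> eps v"
    show ?thesis unfolding d using h assms(2,3) k
      by (cases c; cases b) (simp_all add: fF rho_lt sg_lt)
  qed
qed

lemma f_curve: "fst (face_step n sg eps d) \<noteq> fst d"
proof -
  obtain c k b where d: "d = (c, k, b)" by (cases d) auto
  show ?thesis unfolding d
    by (cases c; cases b) (simp_all add: face_step_def reverse_dart_def Let_def alpha_out_fwd_def
        alpha_out_bwd_def beta_out_fwd_def beta_out_bwd_def)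
qed

lemma curve_univ: "(UNIV :: curve set) = {Alpha, Beta}"
  using curve.exhaust by auto

lemma darts_eq: "darts n = (UNIV :: curve set) \<times> ({..<n} \<times> (UNIV :: bool set))"
  by (auto simp: darts_def)

lemma darts_fin: "finite (darts n)"
  unfolding darts_eq curve_univ by simp

lemma darts_card: "card (darts n) = 4 * n"
  unfolding darts_eq curve_univ by (simp add: card_cartesian_product)

lemma glue_local:
  fixes F :: "dart \<Rightarrow> dart" and y :: dart and n :: nat
  assumes per: "(F^^(2*n)) y = y" and odd: "odd n"
    and dir: "\<And>i. snd (snd ((F^^i) y)) = even i"
    and glue: "\<And>i. i < 2*n \<Longrightarrow> edge_of ((F^^i) y) = edge_of ((F^^((i+n) mod (2*n))) y)"
  shows "(F^^(i+n)) y = reverse_dart ((F^^i) y)"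
proof -
  have npos: "0 < n" using odd by (cases n) auto
  define j where "j = i mod (2*n)"
  have j: "j < 2*n" using npos j_def by simp
  have e1: "(F^^i) y = (F^^j) y" unfolding j_def by (rule funpow_mod[OF per])
  have "(F^^(i+n)) y = (F^^((i+n) mod (2*n))) y" by (rule funpow_mod[OF per])
  also have "(i+n) mod (2*n) = (j+n) mod (2*n)" unfolding j_def by (simp add: mod_add_left_eq)
  finally have e2: "(F^^(i+n)) y = (F^^((j+n) mod (2*n))) y" .
  have ed: "edge_of ((F^^j) y) = edge_of ((F^^((j+n) mod (2*n))) y)" by (rule glue[OF j])
  have par: "even ((j+n) mod (2*n)) = (\<not> even j)"
  proof -
    have "((j+n) mod (2*n)) mod 2 = (j+n) mod 2" by (simp add: mod_mod_cancel)
    hence "even ((j+n) mod (2*n)) = even (j+n)" by (simp add: even_iff_mod_2_eq_zero)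
    then show ?thesis using odd by simp
  qed
  have d1: "snd (snd ((F^^j) y)) = even j" using dir by simp
  have d2: "snd (snd ((F^^((j+n) mod (2*n))) y)) = (\<not> even j)" using dir par by simp
  have "(F^^((j+n) mod (2*n))) y = reverse_dart ((F^^j) y)"
    using ed d1 d2
    by (cases "(F^^j) y"; cases "(F^^((j+n) mod (2*n))) y") (auto simp: edge_of_def reverse_dart_def)
  then show ?thesis using e1 e2 by simp
qed


lemma funpow_comm: "(f^^a) ((f^^b) z) = (f^^b) ((f^^a) z)"
proof -
  have "(f^^a) ((f^^b) z) = (f^^(a+b)) z" by (simp add: funpow_add)
  also have "\<dots> = (f^^(b+a)) z" by (simp add: add.commute)
  also have "\<dots> = (f^^b) ((f^^a) z)" by (simp add: funpow_add)
  finally show ?thesis .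
qed

lemma not_all_glued:
  assumes n: "odd n" "3 \<le> n" and bij: "bij_betw sg {..<n} {..<n}"
    and sf: "single_face n sg eps" and H: "(\<forall>v<n. eps v) \<or> (\<forall>v<n. \<not> eps v)"
  shows "\<not> (\<forall>i<2*n. glued_to_opposite n sg eps c i)"
proof
  assume G: "\<forall>i<2*n. glued_to_opposite n sg eps c i"
  have npos: "0 < n" using n by simp
  define f where "f = face_step n sg eps"
  define x0 :: dart where "x0 = (Alpha, 0, True)"
  define y :: dart where "y = (c, 0, True)"
  define F where "F = f ^^ 2"
  have D: "darts n = range (\<lambda>m. (f^^m) x0)" using sf unfolding single_face_def f_def x0_def .
  have inj: "inj_on f (darts n)" unfolding f_def by (rule f_inj[OF H npos bij])
  have into: "f ` darts n \<subseteq> darts n" unfolding f_def using f_into[OF H npos bij] by blast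
  have "(f^^(card (darts n))) x0 = x0" by (rule orbit_period[OF darts_fin inj into D])
  hence per0: "(f^^(4*n)) x0 = x0" unfolding darts_card .
  have ydarts: "y \<in> darts n" unfolding y_def using npos by (simp add: darts_mem)
  then obtain m0 where m0: "y = (f^^m0) x0" using D by auto
  have pery: "(f^^(4*n)) y = y" unfolding m0 funpow_comm[where f=f and a="4*n" and b=m0] per0 ..
  have Fy: "(F^^i) z = (f^^(2*i)) z" for i z unfolding F_def funpow_mult ..
  have perF: "(F^^(2*n)) y = y" unfolding Fy using pery by (simp add: mult.assoc)
  have iter_darts: "(f^^m) d \<in> darts n" if "d \<in> darts n" for m d
  proof (induction m)
    case 0 then show ?case using that by simp
  next
    case (Suc m) then show ?case using into by auto
  qed
  have curve: "fst ((f^^m) x0) = (if even m then Alpha else Beta)" for m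
  proof (induction m)
    case 0 then show ?case by (simp add: x0_def)
  next
    case (Suc m)
    have "fst (f ((f^^m) x0)) \<noteq> fst ((f^^m) x0)" unfolding f_def by (rule f_curve)
    then show ?case using Suc by (cases "fst (f ((f^^m) x0))") (auto split: if_splits)
  qed
  have dir: "snd (snd ((F^^i) y)) = even i" for i
  proof (induction i)
    case 0 then show ?case by (simp add: y_def)
  next
    case (Suc i)
    have dd: "(F^^i) y \<in> darts n" unfolding Fy by (rule iter_darts[OF ydarts])
    have "(F^^Suc i) y = f (f ((F^^i) y))" by (simp add: F_def numeral_2_eq_2)
    then show ?case using f2_dir[OF H npos bij dd] Suc unfolding f_def by simp
  qed
  have cover: "\<exists>i. (F^^i) y = (c, k, True)" if "k < n" for k
  proof -
    have "(c, k, True) \<in> darts n" using that by (simp add: darts_mem)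
    then obtain m where m: "(c, k, True) = (f^^m) x0" using D by auto
    have "fst ((f^^m) x0) = fst ((f^^m0) x0)" using m m0 unfolding y_def by (metis fst_conv)
    hence par: "even m = even m0" using curve[of m] curve[of m0] by (auto split: if_splits)
    define j where "j = m + 4*n*m0 - m0"
    have "1 * m0 \<le> (4*n) * m0" using npos by (intro mult_le_mono1) simp
    hence "m0 \<le> 4*n*m0" by simp
    hence jm: "j + m0 = m + 4*n*m0" unfolding j_def by linarith
    have jev: "even j"
    proof -
      have "even (j + m0) = even m" unfolding jm by simp
      then show ?thesis using par by auto
    qed
    have "(f^^j) y = (f^^(j+m0)) x0" unfolding m0 by (simp add: funpow_add)
    also have "\<dots> = (f^^m) ((f^^(4*n*m0)) x0)" unfolding jm by (simp add: funpow_add)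
    also have "(f^^(4*n*m0)) x0 = (f^^((4*n*m0) mod (4*n))) x0" by (rule funpow_mod[OF per0])
    also have "\<dots> = x0" by simp
    finally have "(f^^j) y = (c, k, True)" using m by simp
    moreover have "j = 2 * (j div 2)" using jev by simp
    ultimately have "(F^^(j div 2)) y = (c, k, True)" unfolding Fy by metis
    then show ?thesis by blast
  qed
  have glue: "edge_of ((F^^i) y) = edge_of ((F^^((i+n) mod (2*n))) y)" if "i < 2*n" for i
  proof -
    have "glued_to_opposite n sg eps c i" using G that by blast
    then show ?thesis unfolding glued_to_opposite_def side_def Fy f_def y_def .
  qed
  have loc: "(F^^(i+n)) y = reverse_dart ((F^^i) y)" for i
    by (rule glue_local[OF perF n(1) dir glue])
  have key: "F (c, k, False) = reverse_dart (F (c, k, True))" if kn: "k < n" for k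
  proof -
    obtain i where i: "(F^^i) y = (c, k, True)" using cover[OF kn] by blast
    have "(c, k, False) = reverse_dart ((F^^i) y)" unfolding i by (simp add: reverse_dart_def)
    also have "\<dots> = (F^^(i+n)) y" using loc by simp
    finally have e: "(c, k, False) = (F^^(i+n)) y" .
    have "F (c, k, False) = (F^^(Suc i + n)) y" unfolding e by simp
    also have "\<dots> = reverse_dart ((F^^(Suc i)) y)" by (rule loc)
    also have "(F^^(Suc i)) y = F (c, k, True)" using i by simp
    finally show ?thesis .
  qed
  have FF: "F d = f (f d)" for d unfolding F_def by (simp add: numeral_2_eq_2)
  have sl: "\<And>k. k<n \<Longrightarrow> sg k < n" using sg_lt[OF bij] .
  have rl: "\<And>k. k<n \<Longrightarrow> rinv n sg k < n" using rho_lt[OF bij] .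
  have sr: "\<And>k. k<n \<Longrightarrow> sg (rinv n sg k) = k" using sg_rho[OF bij] .
  have rs: "\<And>k. k<n \<Longrightarrow> rinv n sg (sg k) = k" using rho_sg[OF bij] .
  have keyf: "f (f (c, k, False)) = reverse_dart (f (f (c, k, True)))" if "k < n" for k
    using key[OF that] unfolding FF .
  show False using H
  proof
    assume h: "\<forall>v<n. eps v"
    show False
    proof (cases c)
      case Alpha
      have "\<forall>k<n. sg (Suc (rinv n sg k) mod n) = (sg ((rinv n sg (Suc k mod n) + n - 1) mod n) + n - 1) mod n"
      proof (intro allI impI)
        fix k assume k: "k < n"
        show "sg (Suc (rinv n sg k) mod n) = (sg ((rinv n sg (Suc k mod n) + n - 1) mod n) + n - 1) mod n"
          using keyf[OF k] unfolding Alpha f_def using h k npos bij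
          by (simp add: fT reverse_dart_def rl sl)
      qed
      then show False using key_conj[OF n sl rl sr rs] by blast
    next
      case Beta
      have "\<forall>k<n. rinv n sg ((sg k + n - 1) mod n) = (rinv n sg (Suc (sg (Suc k mod n)) mod n) + n - 1) mod n"
      proof (intro allI impI)
        fix k assume k: "k < n"
        show "rinv n sg ((sg k + n - 1) mod n) = (rinv n sg (Suc (sg (Suc k mod n)) mod n) + n - 1) mod n"
          using keyf[OF k] unfolding Beta f_def using h k npos bij
          by (simp add: fT reverse_dart_def rl sl)
      qed
      then show False using key_conj[OF n rl sl rs sr] by blast
    qed
  next
    assume h: "\<forall>v<n. \<not> eps v"
    show False
    proof (cases c)
      case Alpha
      have "\<forall>k<n. sg ((rinv n sg k + n - 1) mod n) = (sg (Suc (rinv n sg (Suc k mod n)) mod n) + n - 1) mod n"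
      proof (intro allI impI)
        fix k assume k: "k < n"
        show "sg ((rinv n sg k + n - 1) mod n) = (sg (Suc (rinv n sg (Suc k mod n)) mod n) + n - 1) mod n"
          using keyf[OF k] unfolding Alpha f_def using h k npos bij
          by (simp add: fF reverse_dart_def rl sl)
      qed
      then show False using key_conj[OF n sl rl sr rs] by blast
    next
      case Beta
      have "\<forall>k<n. rinv n sg (Suc (sg k) mod n) = (rinv n sg ((sg (Suc k mod n) + n - 1) mod n) + n - 1) mod n"
      proof (intro allI impI)
        fix k assume k: "k < n"
        show "rinv n sg (Suc (sg k) mod n) = (rinv n sg ((sg (Suc k mod n) + n - 1) mod n) + n - 1) mod n"
          using keyf[OF k] unfolding Beta f_def using h k npos bij
          by (simp add: fF reverse_dart_def rl sl)
      qed
      then show False using key_conj[OF n rl sl rs sr] by blast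
    qed
  qed
qed

theorem proposition4:
  fixes g n :: nat and sg :: "nat \<Rightarrow> nat" and eps :: "nat \<Rightarrow> bool"
  assumes "g \<ge> 3"
    and "n = 2 * g - 1"
    and "bij_betw sg {..<n} {..<n}"
    and "single_face n sg eps"
    and "coherent n eps"
  shows "(\<exists>i < 2 * n. \<not> glued_to_opposite n sg eps Alpha i)
       \<and> (\<exists>i < 2 * n. \<not> glued_to_opposite n sg eps Beta i)"
proof -
  have n: "odd n" "3 \<le> n" using assms(1,2) by auto
  have H: "(\<forall>v<n. eps v) \<or> (\<forall>v<n. \<not> eps v)"
    using assms(5) unfolding coherent_def alg_int_def by (rule coherent_const)
  show ?thesis
    using not_all_glued[OF n assms(3) assms(4) H, of Alpha] not_all_glued[OF n assms(3) assms(4) H, of Beta]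
    by auto
qed

end
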